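(* Consider the controlled SI optimal control problem described in the context, with one control per node ($M=N$) and given (fixed) initial conditions. Let $(\boldsymbol i^*(t), \boldsymbol\lambda^*(t), \boldsymbol u^*(t))$, $t\in[0,T]$, be an optimal state trajectory, its associated adjoint trajectory, and optimal controls satisfying the Pontryagin Maximum Principle conditions listed in the context. Then $\lambda_j^*(t)\geq 0$ for all $1\leq j\leq N$ and all $t\in[0,T]$.
   Context: Let $N\geq 1$, and let $\boldsymbol A=(A_{jk})$ be an $N\times N$ symmetric matrix with entries in $\{0,1\}$ (adjacency matrix of an undirected, unweighted network on nodes $1,\dots,N$). Fix $\beta>0$, a horizon $T>0$, and initial values $x_{0j}\in[0,1]$. Each node $j$ has its own control $u_j(t)$. The state $i_j(t)\in[0,1]$ (probability node $j$ is informed), with $s_j(t)=1-i_j(t)$, evolves by $\dot i_j(t)=\beta s_j(t)\sum_{k=1}^N A_{jk}i_k(t)+u_j(t)s_j(t)$, $i_j(0)=x_{0j}$, $1\le j\le N$. The objective to be maximized is $J=\frac1N\sum_{j=1}^N i_j(T)-\sum_{j=1}^N\int_0^T g_j(u_j(t))\,dt$, where each $g_j:\mathbb R\to\mathbb R$ is differentiable, strictly convex, even, increasing on $[0,\infty)$, and satisfies $g_j(0)=0$ (so $g_j\ge 0$). The optimal controls are nonnegative: $u_j^*(t)\ge 0$. The Hamiltonian is $H(\boldsymbol i,\boldsymbol\lambda,\boldsymbol u)=-\sum_{j=1}^N g_j(u_j)+\sum_{l=1}^N\lambda_l\big(\beta s_l\sum_{k=1}^N A_{lk}i_k+u_l s_l\big)$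 with $s_l=1-i_l$. The Pontryagin conditions are: $\boldsymbol i^*$ solves the state equations above; the adjoint variables satisfy $\dot\lambda_j^*(t)=-\beta\sum_{l=1}^N\lambda_l^*(t)s_l^*(t)A_{lj}+\beta\lambda_j^*(t)\sum_{k=1}^N A_{jk}i_k^*(t)+\lambda_j^*(t)u_j^*(t)$ with $\lambda_j^*(T)=1/N$; and for each $t$, $\boldsymbol u^*(t)$ maximizes $H(\boldsymbol i^*(t),\boldsymbol\lambda^*(t),\cdot)$ over control values. *)

theory Defs
  imports "HOL-Analysis.Analysis"
begin

text \<open>Nodes are indexed by 1..N. Vectors over the nodes are functions nat => real
  (only the values at indices 1..N matter). A is the adjoint matrix A j k.\<close>

definition SI_hamiltonian ::
  "nat \<Rightarrow> (nat \<Rightarrow> nat \<Rightarrow> real) \<Rightarrow> real \<Rightarrow> (nat \<Rightarrow> real \<Rightarrow> real)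
   \<Rightarrow> (nat \<Rightarrow> real) \<Rightarrow> (nat \<Rightarrow> real) \<Rightarrow> (nat \<Rightarrow> real) \<Rightarrow> real" where
  "SI_hamiltonian N A \<beta> g i lam u =
     - (\<Sum>j=1..N. g j (u j))
     + (\<Sum>l=1..N. lam l * (\<beta> * (1 - i l) * (\<Sum>k=1..N. A l k * i k) + u l * (1 - i l)))"

end

theory Submission
  imports Defs
begin

theorem lemma1:
  fixes N :: nat and A :: "nat \<Rightarrow> nat \<Rightarrow> real" and \<beta> T :: real
    and x0 :: "nat \<Rightarrow> real" and g :: "nat \<Rightarrow> real \<Rightarrow> real"
    and i lam u :: "real \<Rightarrow> nat \<Rightarrow> real"
  assumes N_pos: "N \<ge> 1"
    and A_01: "\<forall>j\<in>{1..N}. \<forall>k\<in>{1..N}. A j k = 0 \<or> A j k = 1"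
    and A_sym: "\<forall>j\<in>{1..N}. \<forall>k\<in>{1..N}. A j k = A k j"
    and beta_pos: "\<beta> > 0" and T_pos: "T > 0"
    and x0_range: "\<forall>j\<in>{1..N}. 0 \<le> x0 j \<and> x0 j \<le> 1"
    and g_diff: "\<forall>j\<in>{1..N}. \<forall>v. g j differentiable (at v)"
    and g_convex: "\<forall>j\<in>{1..N}. \<forall>a b (c::real). a \<noteq> b \<and> 0 < c \<and> c < 1 \<longrightarrow>
                     g j (c * a + (1 - c) * b) < c * g j a + (1 - c) * g j b"
    and g_even: "\<forall>j\<in>{1..N}. \<forall>v. g j (- v) = g j v"
    and g_incr: "\<forall>j\<in>{1..N}. mono_on {0..} (g j)"
    and g_zero: "\<forall>j\<in>{1..N}. g j 0 = 0"
    and i_range: "\<forall>t\<in>{0..T}. \<forall>j\<in>{1..N}. 0 \<le> i t j \<and> i t j \<le> 1"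
    and u_nonneg: "\<forall>t\<in>{0..T}. \<forall>j\<in>{1..N}. u t j \<ge> 0"
    and state_eq: "\<forall>t\<in>{0..T}. \<forall>j\<in>{1..N}.
        ((\<lambda>\<tau>. i \<tau> j) has_real_derivative
           (\<beta> * (1 - i t j) * (\<Sum>k=1..N. A j k * i t k) + u t j * (1 - i t j)))
        (at t within {0..T})"
    and state_init: "\<forall>j\<in>{1..N}. i 0 j = x0 j"
    and adjoint_eq: "\<forall>t\<in>{0..T}. \<forall>j\<in>{1..N}.
        ((\<lambda>\<tau>. lam \<tau> j) has_real_derivative
           (- \<beta> * (\<Sum>l=1..N. lam t l * (1 - i t l) * A l j)
            + \<beta> * lam t j * (\<Sum>k=1..N. A j k * i t k) + lam t j * u t j))
        (at t within {0..T})"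
    and adjoint_final: "\<forall>j\<in>{1..N}. lam T j = 1 / real N"
    and maximality: "\<forall>t\<in>{0..T}. \<forall>v :: nat \<Rightarrow> real.
        SI_hamiltonian N A \<beta> g (i t) (lam t) v \<le> SI_hamiltonian N A \<beta> g (i t) (lam t) (u t)"
  shows "\<forall>t\<in>{0..T}. \<forall>j\<in>{1..N}. lam t j \<ge> 0"
proof -
  define K where "K = \<beta> * real N + 1"
  have "\<beta> * real N \<ge> 0" using beta_pos by simp
  hence Kpos: "K > 0" unfolding K_def by linarith
  have uzero: "u t j = 0" if t: "t \<in> {0..T}" and j: "j \<in> {1..N}" and neg: "lam t j < 0" for t j
  proof -
    define v where "v = (u t)(j := 0)"
    define F where "F = (\<lambda>l x. - g l x + lam t l * (\<beta> * (1 - i t l) * (\<Sum>k=1..N. A l k * i t k) + x * (1 - i t l)))"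
    have H: "\<And>w. SI_hamiltonian N A \<beta> g (i t) (lam t) w = (\<Sum>l=1..N. F l (w l))"
      unfolding SI_hamiltonian_def F_def by (simp add: sum.distrib sum_negf sum_subtractf)
    have fin: "finite {1..N}" by simp
    have "(\<Sum>l=1..N. F l (v l)) = F j (v j) + (\<Sum>l\<in>{1..N}-{j}. F l (v l))"
      using sum.remove[OF fin j] by simp
    moreover have "(\<Sum>l=1..N. F l (u t l)) = F j (u t j) + (\<Sum>l\<in>{1..N}-{j}. F l (u t l))"
      using sum.remove[OF fin j] by simp
    moreover have "(\<Sum>l\<in>{1..N}-{j}. F l (v l)) = (\<Sum>l\<in>{1..N}-{j}. F l (u t l))"
      by (rule sum.cong) (auto simp: v_def)
    moreover have "SI_hamiltonian N A \<beta> g (i t) (lam t) v \<le> SI_hamiltonian N A \<beta> g (i t) (lam t) (u t)"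
      using maximality t by blast
    ultimately have "F j 0 \<le> F j (u t j)"
      unfolding H by (simp add: v_def)
    hence g1: "g j (u t j) \<le> lam t j * u t j * (1 - i t j)"
      unfolding F_def using g_zero j by (simp add: algebra_simps)
    have u0: "u t j \<ge> 0" using u_nonneg t j by auto
    have "1 - i t j \<ge> 0" using i_range t j by auto
    hence "lam t j * u t j * (1 - i t j) \<le> 0" using neg u0
      by (simp add: mult_nonpos_nonneg mult_nonpos_nonneg[of "lam t j" "u t j"])
    hence gle: "g j (u t j) \<le> 0" using g1 by linarith
    show ?thesis
    proof (rule ccontr)
      assume "u t j \<noteq> 0"
      hence up: "u t j > 0" using u0 by simp
      have "g j ((1/2) * u t j + (1 - 1/2) * 0) < (1/2) * g j (u t j) + (1 - 1/2) * g j 0"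
      proof -
        have cv: "\<forall>a b (c::real). a \<noteq> b \<and> 0 < c \<and> c < 1 \<longrightarrow>
                     g j (c * a + (1 - c) * b) < c * g j a + (1 - c) * g j b" using g_convex j by blast
        have ne: "u t j \<noteq> 0" using up by linarith
        have c: "(0::real) < 1/2" "(1/2::real) < 1" by simp_all
        show ?thesis using cv ne c by blast
      qed
      moreover have "(1/2) * u t j + (1 - 1/2) * 0 = u t j / 2" by simp
      moreover have g0: "g j 0 = 0" using g_zero j by blast
      ultimately have "g j (u t j / 2) < 0" using gle by simp
      moreover have "mono_on {0..} (g j)" using g_incr j by blast
      hence "g j 0 \<le> g j (u t j / 2)"
      proof (rule mono_onD)
        show "(0::real) \<in> {0..}" by simp
        show "u t j / 2 \<in> {0..}" using up by simp
        show "(0::real) \<le> u t j / 2" using up by simp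
      qed
      ultimately show False using g0 by simp
    qed
  qed
  define E where "E = (\<lambda>t. exp (K * (T - t)))"
  have Epos: "E t > 0" for t unfolding E_def by simp
  have main: "lam t j + \<epsilon> * E t > 0" if eps: "\<epsilon> > 0" and t: "t \<in> {0..T}" and j: "j \<in> {1..N}" for \<epsilon> t j
  proof -
    define w where "w = (\<lambda>j t. lam t j + \<epsilon> * E t)"
    have wder: "((w j) has_real_derivative
           ((- \<beta> * (\<Sum>l=1..N. lam t l * (1 - i t l) * A l j)
            + \<beta> * lam t j * (\<Sum>k=1..N. A j k * i t k) + lam t j * u t j)
            + \<epsilon> * (E t * (K * (0 - 1))))) (at t within {0..T})"
      if "t \<in> {0..T}" "j \<in> {1..N}" for t j
    proof -
      have d1: "((\<lambda>\<tau>. lam \<tau> j) has_real_derivative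
           (- \<beta> * (\<Sum>l=1..N. lam t l * (1 - i t l) * A l j)
            + \<beta> * lam t j * (\<Sum>k=1..N. A j k * i t k) + lam t j * u t j))
        (at t within {0..T})" using adjoint_eq that by blast
      have d2: "((\<lambda>\<tau>. \<epsilon> * E \<tau>) has_real_derivative \<epsilon> * (E t * (K * (0 - 1)))) (at t within {0..T})"
        unfolding E_def
        by (intro DERIV_cmult DERIV_chain2[OF DERIV_exp] DERIV_diff DERIV_cmult DERIV_const DERIV_ident)
      show ?thesis unfolding w_def using DERIV_add[OF d1 d2] by simp
    qed
    have wcont: "continuous_on {0..T} (w j)" if "j \<in> {1..N}" for j
      unfolding continuous_on_eq_continuous_within
      using wder that DERIV_continuous by blast
    define S where "S = (\<Union>j\<in>{1..N}. {t \<in> {0..T}. w j t \<le> 0})"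
    have Sclosed: "closed S" unfolding S_def
      by (intro closed_UN finite_atLeastAtMost ballI continuous_on_closed_Collect_le wcont)
         (auto intro: continuous_on_const)
    have "S = {}"
    proof (rule ccontr)
      assume Sne: "S \<noteq> {}"
      have bdd: "bdd_above S" unfolding S_def by (rule bdd_aboveI[of _ T]) auto
      define s where "s = Sup S"
      have "s \<in> S" unfolding s_def using closed_contains_Sup[OF Sne bdd Sclosed] .
      then obtain j where j: "j \<in> {1..N}" and s: "s \<in> {0..T}" and wjs: "w j s \<le> 0"
        unfolding S_def by blast
      have above: "w l r > 0" if "r \<in> {0..T}" "r > s" "l \<in> {1..N}" for r l
      proof (rule ccontr)
        assume "\<not> w l r > 0"
        hence "w l r \<le> 0" by simp
        hence "r \<in> S" unfolding S_def using that by blast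
        hence "r \<le> s" unfolding s_def using bdd by (rule cSup_upper)
        thus False using that by simp
      qed
      have lT: "lam T j = 1 / real N" using adjoint_final j by blast
      have "1 / real N > 0" using N_pos by simp
      moreover have "w j T = lam T j + \<epsilon>" unfolding w_def E_def by simp
      ultimately have "w j T > 0" using lT eps by linarith
      hence wT: "w j T > 0" .
      have sT: "s < T"
      proof (rule ccontr)
        assume "\<not> s < T"
        hence "s = T" using s by simp
        thus False using wT wjs by simp
      qed
      have wnn: "w l s \<ge> 0" if l: "l \<in> {1..N}" for l
      proof -
        have "((w l) \<longlongrightarrow> w l s) (at s within {0..T})"
          using wcont[OF l] s by (simp add: continuous_on_def)
        hence "((w l) \<longlongrightarrow> w l s) (at s within {s..T})"
          by (rule tendsto_within_subset) (use s in auto)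
        hence lim: "((w l) \<longlongrightarrow> w l s) (at_right s)"
          using at_within_Icc_at_right[OF sT] by simp
        have "eventually (\<lambda>r. 0 \<le> w l r) (at_right s)"
          unfolding eventually_at_right[OF sT]
          using above[OF _ _ l] s by (intro exI[of _ T]) (auto simp: sT less_imp_le)
        from tendsto_lowerbound[OF lim this] show ?thesis by simp
      qed
      have lamj: "lam s j \<le> - \<epsilon> * E s" using wjs unfolding w_def by simp
      have eE: "\<epsilon> * E s > 0" using eps Epos[of s] by simp
      hence lamneg: "lam s j < 0" using lamj by linarith
      have u0: "u s j = 0" using uzero[OF s j lamneg] .
      have laml: "- lam s l \<le> \<epsilon> * E s" if "l \<in> {1..N}" for l
        using wnn[OF that] unfolding w_def by simp
      have trm: "- lam s l * ((1 - i s l) * A l j) \<le> \<epsilon> * E s" if l: "l \<in> {1..N}" for l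
      proof -
        have ir: "0 \<le> i s l" "i s l \<le> 1" using i_range s l by auto
        have ar: "A l j = 0 \<or> A l j = 1" using A_01 l j by blast
        have c0: "0 \<le> (1 - i s l) * A l j" and c1: "(1 - i s l) * A l j \<le> 1"
          using ir ar by auto
        show ?thesis
        proof (cases "- lam s l \<ge> 0")
          case True
          have "- lam s l * ((1 - i s l) * A l j) \<le> - lam s l * 1"
            using True c1 by (intro mult_left_mono) auto
          thus ?thesis using laml[OF l] by simp
        next
          case False
          hence "- lam s l * ((1 - i s l) * A l j) \<le> 0" using c0
            by (simp add: mult_nonpos_nonneg)
          thus ?thesis using eE by linarith
        qed
      qed
      have "(\<Sum>l=1..N. - lam s l * ((1 - i s l) * A l j)) \<le> (\<Sum>l=1..N. \<epsilon> * E s)"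
        by (rule sum_mono) (rule trm, simp)
      hence sumb: "- (\<Sum>l=1..N. lam s l * (1 - i s l) * A l j) \<le> real N * (\<epsilon> * E s)"
        by (simp add: sum_negf mult.assoc)
      have sk: "(\<Sum>k=1..N. A j k * i s k) \<ge> 0"
      proof (intro sum_nonneg)
        fix k assume k: "k \<in> {1..N}"
        have "0 \<le> i s k" using i_range s k by auto
        moreover have "A j k = 0 \<or> A j k = 1" using A_01 k j by blast
        ultimately show "0 \<le> A j k * i s k" by auto
      qed
      have t2: "\<beta> * lam s j * (\<Sum>k=1..N. A j k * i s k) \<le> 0"
        using beta_pos lamneg sk by (simp add: mult_nonpos_nonneg mult_pos_neg less_imp_le)
      define D where "D = (- \<beta> * (\<Sum>l=1..N. lam s l * (1 - i s l) * A l j)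
            + \<beta> * lam s j * (\<Sum>k=1..N. A j k * i s k) + lam s j * u s j)
            + \<epsilon> * (E s * (K * (0 - 1)))"
      have "- \<beta> * (\<Sum>l=1..N. lam s l * (1 - i s l) * A l j) \<le> \<beta> * (real N * (\<epsilon> * E s))"
        using mult_left_mono[OF sumb less_imp_le[OF beta_pos]] by simp
      hence "D \<le> \<beta> * (real N * (\<epsilon> * E s)) - K * (\<epsilon> * E s)"
        unfolding D_def using t2 u0 by (simp add: algebra_simps)
      also have "\<dots> = - (\<epsilon> * E s)" unfolding K_def by (simp add: algebra_simps)
      finally have Dneg: "D < 0" using eE by linarith
      obtain d where d: "d > 0" and dd: "\<forall>h>0. s + h \<in> {0..T} \<longrightarrow> h < d \<longrightarrow> w j s > w j (s + h)"
        using has_real_derivative_neg_dec_right[OF wder[OF s j, folded D_def] Dneg] by blast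
      define h where "h = min (d/2) ((T - s)/2)"
      have h: "h > 0" "h < d" "s + h \<in> {0..T}" using d sT s unfolding h_def min_def by (auto simp: field_simps)
      have "w j (s + h) < 0" using dd h wjs by force
      moreover have "w j (s + h) > 0" using above[OF h(3) _ j] h by simp
      ultimately show False by simp
    qed
    thus ?thesis using t j unfolding S_def w_def by force
  qed
  show ?thesis
  proof (intro ballI)
    fix t j assume t: "t \<in> {0..T}" and j: "j \<in> {1..N}"
    show "lam t j \<ge> 0"
    proof (rule ccontr)
      assume "\<not> lam t j \<ge> 0"
      hence neg: "lam t j < 0" by simp
      define \<epsilon> where "\<epsilon> = - lam t j / (2 * E t)"
      have "\<epsilon> > 0" unfolding \<epsilon>_def using neg Epos[of t] by (simp add: divide_neg_pos)
      from main[OF this t j] have "lam t j + \<epsilon> * E t > 0" .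
      moreover have "\<epsilon> * E t = - lam t j / 2" unfolding \<epsilon>_def using Epos[of t] by simp
      ultimately show False using neg by simp
    qed
  qed
qed

end
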